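(* For every integer $k\ge 2$, \[\overline{\alpha}(\{1,k,k+1\})=\begin{cases}\frac{2k}{6k+3} & k\equiv 0\pmod 3,\\ \frac13 & k\equiv 1\pmod 3,\\ \frac{k+1}{3k+6} & k\equiv 2\pmod 3.\end{cases}\]
   Context: For a finite set $S$ of positive integers, the distance graph $G(S)$ has vertex set $\mathbb{Z}$, with $i,j$ adjacent iff $|i-j|\in S$. The density of $A\subseteq\mathbb{Z}$ is $\delta(A)=\limsup_{N\to\infty}\frac{|A\cap[-N,N]|}{2N+1}$, and the independence ratio $\overline{\alpha}(S)$ is the supremum of $\delta(A)$ over independent sets $A$ of $G(S)$. *)

theory Defs
  imports "HOL-Analysis.Analysis"
begin

definition dist_indep :: "nat set \<Rightarrow> int set \<Rightarrow> bool" where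
  "dist_indep S A \<longleftrightarrow> (\<forall>i\<in>A. \<forall>j\<in>A. nat \<bar>i - j\<bar> \<notin> S)"

definition upper_density :: "int set \<Rightarrow> ereal" where
  "upper_density A = limsup (\<lambda>N::nat. ereal (real (card (A \<inter> {- int N .. int N})) / real (2*N+1)))"

definition indep_ratio :: "nat set \<Rightarrow> ereal" where
  "indep_ratio S = (SUP A \<in> {A. dist_indep S A}. upper_density A)"

end

theory Submission
  imports Defs "HOL-Real_Asymp.Real_Asymp"
begin


lemma count_shift:
  fixes A :: "int set" and N R t :: nat
  assumes "t \<le> R"
  shows "card (A \<inter> {- int N .. int N}) \<le> (\<Sum>x\<in>{- int N - int R .. int N}. (of_bool (x + int t \<in> A)::nat))"
proof -
  have "card (A \<inter> {- int N .. int N}) = card ((\<lambda>y. y - int t) ` (A \<inter> {- int N .. int N}))"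
    by (simp add: card_image inj_on_def)
  also have "\<dots> \<le> card ({- int N - int R .. int N} \<inter> {x. x + int t \<in> A})"
    by (rule card_mono) (use assms in auto)
  also have "\<dots> = (\<Sum>x\<in>{- int N - int R .. int N}. (of_bool (x + int t \<in> A)::nat))"
    by simp
  finally show ?thesis .
qed

lemma upper_gen:
  fixes A :: "int set" and w :: "nat \<Rightarrow> nat" and R c :: nat
  assumes sig: "(\<Sum>t\<le>R. w t) > 0"
  and loc: "\<And>x. (\<Sum>t\<le>R. w t * of_bool (x + int t \<in> A)) \<le> c"
  shows "upper_density A \<le> ereal (real c / real (\<Sum>t\<le>R. w t))"
proof -
  define s where "s = (\<Sum>t\<le>R. w t)"
  have key: "s * card (A \<inter> {- int N .. int N}) \<le> c * (2*N+R+1)" for N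
  proof -
    let ?X = "{- int N - int R .. int N}"
    have cX: "card ?X = 2*N+R+1" by simp
    have "(\<Sum>x\<in>?X. \<Sum>t\<le>R. w t * of_bool (x + int t \<in> A)) \<le> card ?X * c"
      using sum_bounded_above[where A="?X" and K=c and f="\<lambda>x. \<Sum>t\<le>R. w t * of_bool (x + int t \<in> A)"] loc by simp
    moreover have "(\<Sum>x\<in>?X. \<Sum>t\<le>R. w t * of_bool (x + int t \<in> A))
        = (\<Sum>t\<le>R. w t * (\<Sum>x\<in>?X. (of_bool (x + int t \<in> A)::nat)))"
      by (subst sum.swap) (simp add: sum_distrib_left mult.commute)
    moreover have "(\<Sum>t\<le>R. w t * card (A \<inter> {- int N .. int N})) \<le> (\<Sum>t\<le>R. w t * (\<Sum>x\<in>?X. (of_bool (x + int t \<in> A)::nat)))"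
      by (rule sum_mono) (use count_shift[of _ R A N] in auto)
    moreover have "(\<Sum>t\<le>R. w t * card (A \<inter> {- int N .. int N})) = s * card (A \<inter> {- int N .. int N})"
      by (simp add: s_def sum_distrib_right)
    ultimately show ?thesis using cX by (simp add: mult.commute)
  qed
  have spos: "real s > 0" using sig s_def by (simp del: of_nat_sum)
  have le: "ereal (real (card (A \<inter> {- int N .. int N})) / real (2*N+1))
       \<le> ereal (real c / real s * ((2*real N + real R + 1) / (2 * real N + 1)))" for N
  proof -
    have "real (s * card (A \<inter> {- int N .. int N})) \<le> real (c * (2*N+R+1))"
      using key[of N] by (simp only: of_nat_le_iff)
    then have h: "real s * real (card (A \<inter> {- int N .. int N})) \<le> real c * (2*real N + real R + 1)"
      by (simp add: algebra_simps)
    have "real (card (A \<inter> {- int N .. int N})) / real (2*N+1)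
        = (real s * real (card (A \<inter> {- int N .. int N}))) / (real s * (2*real N+1))"
      using spos by simp
    also have "\<dots> \<le> (real c * (2*real N + real R + 1)) / (real s * (2*real N+1))"
      by (rule divide_right_mono[OF h]) (use spos in simp)
    also have "\<dots> = real c / real s * ((2*real N + real R + 1) / (2 * real N + 1))"
      by simp
    finally show ?thesis by simp
  qed
  have lim: "(\<lambda>N::nat. ereal (real c / real s * ((2*real N + real R + 1) / (2 * real N + 1)))) \<longlonglongrightarrow> ereal (real c / real s * 1)"
  proof -
    have "(\<lambda>N::nat. (2*real N + real R + 1) / (2 * real N + 1)) \<longlonglongrightarrow> 1" by real_asymp
    then show ?thesis by (intro tendsto_ereal tendsto_mult tendsto_const)
  qed
  have "upper_density A \<le> limsup (\<lambda>N::nat. ereal (real c / real s * ((2*real N + real R + 1) / (2 * real N + 1))))"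
    unfolding upper_density_def by (rule Limsup_mono) (use le in auto)
  also have "\<dots> = ereal (real c / real s)"
    using lim_imp_Limsup[OF trivial_limit_sequentially lim] by simp
  finally show ?thesis by (simp add: s_def)
qed


lemma ivl_split: "(0::int) \<le> M \<Longrightarrow> 0 \<le> P \<Longrightarrow> {x..x+M+P-1} = {x..x+M-1} \<union> {x+M..x+M+P-1}"
  by auto

lemma blocks:
  fixes A :: "int set" and p c q :: nat
  assumes win: "\<And>x. card (A \<inter> {x..x + int p - 1}) \<ge> c"
  shows "card (A \<inter> {x..x + int (q*p) - 1}) \<ge> q*c"
proof (induction q arbitrary: x)
  case 0 then show ?case by simp
next
  case (Suc q)
  have eq: "A \<inter> {x..x + int (Suc q*p) - 1} = (A \<inter> {x..x + int (q*p) - 1}) \<union> (A \<inter> {x + int (q*p)..x + int (q*p) + int p - 1})"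
  proof -
    have "int (Suc q*p) = int (q*p) + int p" by simp
    then have "{x..x + int (Suc q*p) - 1} = {x..x + int (q*p) - 1} \<union> {x + int (q*p)..x + int (q*p) + int p - 1}"
      using ivl_split[of "int (q*p)" "int p" x] by (simp add: algebra_simps)
    then show ?thesis by auto
  qed
  have "card (A \<inter> {x..x + int (Suc q*p) - 1}) = card (A \<inter> {x..x + int (q*p) - 1}) + card (A \<inter> {x + int (q*p)..x + int (q*p) + int p - 1})"
    unfolding eq by (rule card_Un_disjoint) auto
  moreover have "card (A \<inter> {x + int (q*p)..x + int (q*p) + int p - 1}) \<ge> c" by (rule win)
  ultimately show ?case using Suc[of x] by simp
qed

lemma lower_gen:
  fixes A :: "int set" and p c :: nat
  assumes p: "p > 0" and win: "\<And>x. card (A \<inter> {x..x + int p - 1}) \<ge> c"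
  shows "upper_density A \<ge> ereal (real c / real p)"
proof -
  have le: "ereal (real c / real p - real c / (2 * real N + 1)) \<le> ereal (real (card (A \<inter> {- int N .. int N})) / real (2*N+1))" for N
  proof -
    define q where "q = (2*N+1) div p"
    have qp: "q * p \<le> 2*N+1" unfolding q_def by (simp add: div_times_less_eq_dividend)
    have qp2: "2*N+1 < (q+1) * p" unfolding q_def using p
      by (metis add.commute dividend_less_div_times mult.commute mult_Suc_right plus_1_eq_Suc)
    have qp': "- int N + int (q*p) - 1 \<le> int N" using qp by linarith
    have "q*c \<le> card (A \<inter> {- int N..- int N + int (q*p) - 1})" by (rule blocks[OF win])
    also have "\<dots> \<le> card (A \<inter> {- int N .. int N})"
      by (rule card_mono) (use qp' in auto)
    finally have h: "real q * real c \<le> real (card (A \<inter> {- int N .. int N}))"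
      by (metis of_nat_le_iff of_nat_mult)
    have h2: "(2 * real N + 1) / real p - 1 \<le> real q"
    proof -
      have "real (2*N+1) < real ((q+1) * p)" using qp2 by (simp only: of_nat_less_iff)
      then have "2 * real N + 1 < (real q + 1) * real p" by (simp add: algebra_simps)
      then have "(2 * real N + 1) / real p < real q + 1" using p by (simp add: divide_less_eq)
      then show ?thesis by simp
    qed
    have "real c / real p - real c / (2 * real N + 1) = ((2 * real N + 1) / real p - 1) * real c / (2 * real N + 1)"
      by (simp add: field_simps)
    also have "\<dots> \<le> real q * real c / (2 * real N + 1)"
      by (intro divide_right_mono mult_right_mono h2) auto
    also have "\<dots> \<le> real (card (A \<inter> {- int N .. int N})) / (2 * real N + 1)"
      by (intro divide_right_mono h) auto
    finally show ?thesis by (simp add: add.commute)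
  qed
  have lim: "(\<lambda>N::nat. ereal (real c / real p - real c / (2 * real N + 1))) \<longlonglongrightarrow> ereal (real c / real p)"
  proof -
    have "(\<lambda>N::nat. real c / real p - real c / (2 * real N + 1)) \<longlonglongrightarrow> real c / real p" by real_asymp
    then show ?thesis by (rule tendsto_ereal)
  qed
  have "ereal (real c / real p) = limsup (\<lambda>N::nat. ereal (real c / real p - real c / (2 * real N + 1)))"
    using lim_imp_Limsup[OF trivial_limit_sequentially lim] by simp
  also have "\<dots> \<le> upper_density A"
    unfolding upper_density_def by (rule Limsup_mono) (use le in auto)
  finally show ?thesis .
qed


lemma confl:
  assumes ind: "dist_indep {1,k,k+1} A" and a: "a \<in> A" and b: "a + d \<in> A"
    and d: "d = 1 \<or> d = int k \<or> d = int k + 1"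
  shows False
proof -
  have "nat \<bar>(a + d) - a\<bar> \<notin> {1,k,k+1}" using ind a b unfolding dist_indep_def by blast
  moreover have "nat \<bar>(a + d) - a\<bar> \<in> {1,k,k+1}" using d by auto
  ultimately show False by blast
qed

lemma c1: "dist_indep {1,k,k+1} A \<Longrightarrow> a \<in> A \<Longrightarrow> a + 1 \<in> A \<Longrightarrow> False"
  using confl[of k A a 1] by auto
lemma ck: "dist_indep {1,k,k+1} A \<Longrightarrow> a \<in> A \<Longrightarrow> a + int k \<in> A \<Longrightarrow> False"
  using confl[of k A a "int k"] by auto
lemma ck1: "dist_indep {1,k,k+1} A \<Longrightarrow> a \<in> A \<Longrightarrow> a + (int k + 1) \<in> A \<Longrightarrow> False"
  using confl[of k A a "int k + 1"] by auto

lemma shift1: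
  fixes g :: "nat \<Rightarrow> nat"
  assumes "P > 0"
  shows "(\<Sum>i<P. g ((i+1) mod P)) = (\<Sum>i<P. g i)"
proof -
  obtain Q where P: "P = Suc Q" using assms by (cases P) auto
  have "(\<Sum>i<Suc Q. g ((i+1) mod Suc Q)) = (\<Sum>i<Q. g ((i+1) mod Suc Q)) + g 0"
    by simp
  also have "(\<Sum>i<Q. g ((i+1) mod Suc Q)) = (\<Sum>i<Q. g (Suc i))"
    by (rule sum.cong) auto
  also have "\<dots> + g 0 = (\<Sum>i<Suc Q. g i)"
    by (simp only: sum.lessThan_Suc_shift add.commute)
  finally show ?thesis using P by simp
qed

lemma cyclic_sum:
  fixes g :: "nat \<Rightarrow> nat"
  assumes P: "P > 0" and tri: "\<And>i. g (i mod P) + g ((i+1) mod P) + g ((i+2) mod P) \<le> 2"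
  shows "3 * (\<Sum>i<P. g i) \<le> 2*P"
proof -
  have s1: "(\<Sum>i<P. g ((i+1) mod P)) = (\<Sum>i<P. g i)" by (rule shift1[OF P])
  have "(\<Sum>i<P. g ((i+2) mod P)) = (\<Sum>i<P. (\<lambda>j. g ((j+1) mod P)) ((i+1) mod P))"
    by (rule sum.cong) (auto simp: mod_simps)
  also have "\<dots> = (\<Sum>i<P. g ((i+1) mod P))" by (rule shift1[OF P])
  finally have s2: "(\<Sum>i<P. g ((i+2) mod P)) = (\<Sum>i<P. g i)" using s1 by simp
  have s0: "(\<Sum>i<P. g (i mod P)) = (\<Sum>i<P. g i)" by (rule sum.cong) auto
  have "(\<Sum>i<P. g (i mod P) + g ((i+1) mod P) + g ((i+2) mod P)) \<le> (\<Sum>i<P. 2)"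
    by (rule sum_mono) (rule tri)
  then show ?thesis using s0 s1 s2 by (simp add: sum.distrib)
qed

definition g0 :: "nat \<Rightarrow> int set \<Rightarrow> int \<Rightarrow> nat \<Rightarrow> nat" where
  "g0 k A x i = (if i < k then of_bool (x + int i \<in> A) else 0) + of_bool (x + int k + int i \<in> A)"

lemma g0_le1:
  assumes ind: "dist_indep {1,k,k+1} A"
  shows "g0 k A x i \<le> 1"
  using ck[OF ind, of "x + int i"] unfolding g0_def by (auto simp: algebra_simps)

lemma g0_normal:
  assumes ind: "dist_indep {1,k,k+1} A" and j: "j + 2 \<le> k"
  shows "g0 k A x j + g0 k A x (j+1) + g0 k A x (j+2) \<le> 2"
proof -
  note c1[OF ind, of "x + int j"] c1[OF ind, of "x + int j + 1"]
    c1[OF ind, of "x + int k + int j"] c1[OF ind, of "x + int k + int j + 1"]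
    ck[OF ind, of "x + int j"] ck[OF ind, of "x + int j + 1"] ck[OF ind, of "x + int j + 2"]
    ck1[OF ind, of "x + int j"] ck1[OF ind, of "x + int j + 1"]
  then show ?thesis using j unfolding g0_def by (auto simp: algebra_simps)
qed

lemma g0_wrap1:
  assumes ind: "dist_indep {1,k,k+1} A" and k: "k \<ge> 2"
  shows "g0 k A x (k-1) + g0 k A x k + g0 k A x 0 \<le> 2"
proof -
  have e1: "int (k-1) = int k - 1" using k by simp
  note ck1[OF ind, of "x + int k - 1"] c1[OF ind, of "x + int k + int k - 1"] ck[OF ind, of x] ck[OF ind, of "x + int k - 1"]
  then show ?thesis using k unfolding g0_def e1 by (auto simp: algebra_simps)
qed

lemma g0_wrap2:
  assumes ind: "dist_indep {1,k,k+1} A" and k: "k \<ge> 2"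
  shows "g0 k A x k + g0 k A x 0 + g0 k A x 1 \<le> 2"
proof -
  note ck[OF ind, of "x + int k"] c1[OF ind, of "x"] ck1[OF ind, of x] ck[OF ind, of x] ck[OF ind, of "x+1"]
  then show ?thesis using k unfolding g0_def by (auto simp: algebra_simps)
qed

lemma g0_tri:
  assumes ind: "dist_indep {1,k,k+1} A" and k: "k \<ge> 2"
  shows "g0 k A x (i mod (k+1)) + g0 k A x ((i+1) mod (k+1)) + g0 k A x ((i+2) mod (k+1)) \<le> 2"
proof -
  define j where "j = i mod (k+1)"
  have jk: "j \<le> k" unfolding j_def by (simp add: less_Suc_eq_le)
  have n1: "(i+1) mod (k+1) = (if j = k then 0 else j+1)"
    unfolding j_def by (simp add: mod_Suc)
  have n2: "(i+2) mod (k+1) = (if j+1 = k then 0 else if j = k then 1 else j+2)"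
  proof -
    have "(i+2) mod (k+1) = ((i+1) mod (k+1) + 1) mod (k+1)" by (simp add: mod_simps)
    then show ?thesis using n1 jk k by (auto simp: mod_Suc)
  qed
  consider "j + 2 \<le> k" | "j = k - 1" | "j = k" using jk by linarith
  then show ?thesis
  proof cases
    case 1
    then have "(i+1) mod (k+1) = j+1" "(i+2) mod (k+1) = j+2" using n1 n2 by auto
    moreover have "i mod (k+1) = j" using j_def by simp
    ultimately show ?thesis using g0_normal[OF ind 1, of x] by (simp only:)
  next
    case 2 then have "j + 1 = k" "j \<noteq> k" using k by auto
    then have "(i+1) mod (k+1) = k" "(i+2) mod (k+1) = 0" using n1 n2 by auto
    moreover have "i mod (k+1) = k - 1" using j_def 2 by simp
    ultimately show ?thesis using g0_wrap1[OF ind k, of x] by (simp only:)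
  next
    case 3
    then have "(i+1) mod (k+1) = 0" "(i+2) mod (k+1) = 1" using n1 n2 k by auto
    moreover have "i mod (k+1) = k" using j_def 3 by simp
    ultimately show ?thesis using g0_wrap2[OF ind k, of x] by (simp only:)
  qed
qed


lemma g0_sum:
  "(\<Sum>i<k+1. g0 k A x i) = (\<Sum>t<2*k+1. of_bool (x + int t \<in> A))"
proof -
  have a: "(\<Sum>i<k+1. (if i < k then of_bool (x + int i \<in> A) else 0)) = (\<Sum>i<k. (of_bool (x + int i \<in> A)::nat))"
  proof -
    have "(\<Sum>i<k+1. (if i < k then of_bool (x + int i \<in> A) else 0)) = (\<Sum>i<k. (if i < k then (of_bool (x + int i \<in> A)::nat) else 0))"
      by (simp only: sum.lessThan_Suc add.commute[of k 1] plus_1_eq_Suc) simp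
    also have "\<dots> = (\<Sum>i<k. (of_bool (x + int i \<in> A)::nat))"
      by (rule sum.cong) auto
    finally show ?thesis .
  qed
  have b: "(\<Sum>i<k+1. (of_bool (x + int k + int i \<in> A)::nat)) = (\<Sum>t\<in>{k..<2*k+1}. of_bool (x + int t \<in> A))"
  proof -
    have "(\<Sum>t\<in>{k..<2*k+1}. (of_bool (x + int t \<in> A)::nat)) = (\<Sum>t\<in>{0+k..<(k+1)+k}. of_bool (x + int t \<in> A))"
      by (rule arg_cong[where f="sum _"]) (simp add: mult_2)
    also have "\<dots> = (\<Sum>i\<in>{0..<k+1}. of_bool (x + int (i + k) \<in> A))"
      by (rule sum.shift_bounds_nat_ivl)
    also have "\<dots> = (\<Sum>i<k+1. of_bool (x + int k + int i \<in> A))"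
      by (simp add: atLeast0LessThan algebra_simps)
    finally show ?thesis by simp
  qed
  have c: "(\<Sum>t<2*k+1. (of_bool (x + int t \<in> A)::nat)) = (\<Sum>t<k. of_bool (x + int t \<in> A)) + (\<Sum>t\<in>{k..<2*k+1}. of_bool (x + int t \<in> A))"
  proof -
    have e: "{..<2*k+1} = {0..<2*k+1}" "{..<k} = {0..<k}" by auto
    show ?thesis unfolding e by (rule sum.atLeastLessThan_concat[symmetric]) auto
  qed
  show ?thesis unfolding g0_def sum.distrib a b c by (rule refl)
qed

lemma local0:
  assumes ind: "dist_indep {1,k,k+1} A" and k: "k = 3*m" "m \<ge> 1"
  shows "(\<Sum>t<2*k+1. (of_bool (x + int t \<in> A)::nat)) \<le> 2*m"
proof -
  have k2: "k \<ge> 2" using k by simp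
  have "3 * (\<Sum>i<k+1. g0 k A x i) \<le> 2*(k+1)"
    by (rule cyclic_sum) (use g0_tri[OF ind k2] in auto)
  then show ?thesis using g0_sum[of k A x] k by simp
qed



definition g2 :: "nat \<Rightarrow> int set \<Rightarrow> int \<Rightarrow> nat \<Rightarrow> nat" where
  "g2 k A x i = of_bool (x + int i \<in> A) + of_bool (x + (int k + 1) + int i \<in> A)"

lemma g2_normal:
  assumes ind: "dist_indep {1,k,k+1} A" and j: "j + 2 \<le> k + 1"
  shows "g2 k A x j + g2 k A x (j+1) + g2 k A x (j+2) \<le> 2"
proof -
  note c1[OF ind, of "x + int j"] c1[OF ind, of "x + int j + 1"]
    c1[OF ind, of "x + int k + 1 + int j"] c1[OF ind, of "x + int k + 1 + int j + 1"]
    ck1[OF ind, of "x + int j"] ck1[OF ind, of "x + int j + 1"] ck1[OF ind, of "x + int j + 2"]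
    ck[OF ind, of "x + int j + 1"] ck[OF ind, of "x + int j + 2"]
  then show ?thesis using j unfolding g2_def by (auto simp: algebra_simps)
qed

lemma g2_wrap1:
  assumes ind: "dist_indep {1,k,k+1} A" and k: "k \<ge> 2"
  shows "g2 k A x k + g2 k A x (k+1) + g2 k A x 0 \<le> 2"
proof -
  note c1[OF ind, of "x + int k"] ck[OF ind, of x] ck1[OF ind, of "x + int k + 1"]
    c1[OF ind, of "x + 2 * int k + 1"] ck[OF ind, of "x + int k + 1"]
    ck1[OF ind, of "x + int k"] ck1[OF ind, of x]
  then show ?thesis using k unfolding g2_def by (auto simp: algebra_simps)
qed

lemma g2_wrap2:
  assumes ind: "dist_indep {1,k,k+1} A" and k: "k \<ge> 2"
  shows "g2 k A x (k+1) + g2 k A x 0 + g2 k A x 1 \<le> 2"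
proof -
  note c1[OF ind, of x] c1[OF ind, of "x + int k + 1"] ck[OF ind, of "x + int k + 2"]
    ck[OF ind, of "x + 1"] ck1[OF ind, of "x + int k + 1"] ck1[OF ind, of x] ck1[OF ind, of "x + 1"]
  then show ?thesis using k unfolding g2_def by (auto simp: algebra_simps)
qed

lemma g2_tri:
  assumes ind: "dist_indep {1,k,k+1} A" and k: "k \<ge> 2"
  shows "g2 k A x (i mod (k+2)) + g2 k A x ((i+1) mod (k+2)) + g2 k A x ((i+2) mod (k+2)) \<le> 2"
proof -
  define j where "j = i mod (k+2)"
  have jk: "j \<le> k+1" unfolding j_def by (simp add: less_Suc_eq_le)
  have n1: "(i+1) mod (k+2) = (if j = k+1 then 0 else j+1)"
    unfolding j_def by (simp add: mod_Suc)
  have n2: "(i+2) mod (k+2) = (if j = k then 0 else if j = k+1 then 1 else j+2)"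
  proof -
    have "(i+2) mod (k+2) = ((i+1) mod (k+2) + 1) mod (k+2)" by (simp add: mod_simps)
    then show ?thesis using n1 jk k by (auto simp: mod_Suc)
  qed
  consider "j + 2 \<le> k + 1" | "j = k" | "j = k + 1" using jk by linarith
  then show ?thesis
  proof cases
    case 1
    then have "(i+1) mod (k+2) = j+1" "(i+2) mod (k+2) = j+2" using n1 n2 by auto
    moreover have "i mod (k+2) = j" using j_def by simp
    ultimately show ?thesis using g2_normal[OF ind 1, of x] by (simp only:)
  next
    case 2
    then have "(i+1) mod (k+2) = k+1" "(i+2) mod (k+2) = 0" using n1 n2 by auto
    moreover have "i mod (k+2) = k" using j_def 2 by simp
    ultimately show ?thesis using g2_wrap1[OF ind k, of x] by (simp only:)
  next
    case 3
    then have "(i+1) mod (k+2) = 0" "(i+2) mod (k+2) = 1" using n1 n2 k by auto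
    moreover have "i mod (k+2) = k+1" using j_def 3 by simp
    ultimately show ?thesis using g2_wrap2[OF ind k, of x] by (simp only:)
  qed
qed

lemma sum_split_nat:
  fixes f :: "nat \<Rightarrow> nat"
  shows "(\<Sum>t<a+b. f t) = (\<Sum>t<a. f t) + (\<Sum>i<b. f (a+i))"
  by (induction b) (simp_all add: add.assoc)

lemma g2_sum:
  "(\<Sum>i<k+2. g2 k A x i) = (\<Sum>t<2*k+3. of_bool (x + int t \<in> A)) + of_bool (x + int k + 1 \<in> A)"
proof -
  define f :: "nat \<Rightarrow> nat" where "f t = of_bool (x + int t \<in> A)" for t
  have a: "(\<Sum>i<k+2. f i) = (\<Sum>i<k+1. f i) + f (k+1)"
    using sum_split_nat[of f "k+1" 1] by (simp add: numeral_2_eq_2)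
  have b: "(\<Sum>i<k+2. (of_bool (x + (int k + 1) + int i \<in> A)::nat)) = (\<Sum>i<k+2. f (k+1+i))"
    unfolding f_def by (rule sum.cong) (auto simp: algebra_simps)
  have c: "(\<Sum>t<2*k+3. f t) = (\<Sum>t<k+1. f t) + (\<Sum>i<k+2. f (k+1+i))"
  proof -
    have "2*k+3 = (k+1)+(k+2)" by simp
    then show ?thesis using sum_split_nat[of f "k+1" "k+2"] by (simp only:)
  qed
  have d: "f (k+1) = of_bool (x + int k + 1 \<in> A)" unfolding f_def by (simp add: algebra_simps)
  have "(\<Sum>i<k+2. g2 k A x i) = (\<Sum>i<k+2. f i) + (\<Sum>i<k+2. (of_bool (x + (int k + 1) + int i \<in> A)::nat))"
    unfolding g2_def f_def by (rule sum.distrib)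
  also have "\<dots> = (\<Sum>t<2*k+3. f t) + f (k+1)"
    unfolding a b c by (simp only: ac_simps)
  finally show ?thesis unfolding d by (simp only: f_def)
qed

lemma local2:
  assumes ind: "dist_indep {1,k,k+1} A" and k: "k = 3*m+2"
  shows "(\<Sum>t<2*k+3. (of_bool (x + int t \<in> A)::nat)) + of_bool (x + int k + 1 \<in> A) \<le> 2*m+2"
proof -
  have k2: "k \<ge> 2" using k by simp
  have "3 * (\<Sum>i<k+2. g2 k A x i) \<le> 2*(k+2)"
    by (rule cyclic_sum) (use g2_tri[OF ind k2] in auto)
  then show ?thesis using g2_sum[of k A x] k by simp
qed


lemma periodic_card:
  fixes p :: nat and R :: "int set"
  assumes p: "p > 0" and R: "R \<subseteq> {0..<int p}"
  shows "card ({n. n mod int p \<in> R} \<inter> {x..x + int p - 1}) = card R"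
proof -
  let ?S = "{n. n mod int p \<in> R} \<inter> {x..x + int p - 1}"
  have inj: "inj_on (\<lambda>n. n mod int p) ?S"
  proof (rule inj_onI)
    fix a b assume a: "a \<in> ?S" and b: "b \<in> ?S" and e: "a mod int p = b mod int p"
    have "int p dvd a - b" using e by (simp add: mod_eq_dvd_iff)
    moreover have "\<bar>a - b\<bar> < int p" using a b by auto
    ultimately show "a = b"
      by (metis abs_of_nat dvd_imp_le_int eq_iff_diff_eq_0 linorder_not_less)
  qed
  have img: "(\<lambda>n. n mod int p) ` ?S = R"
  proof
    show "(\<lambda>n. n mod int p) ` ?S \<subseteq> R" by auto
  next
    show "R \<subseteq> (\<lambda>n. n mod int p) ` ?S"
    proof
      fix r assume r: "r \<in> R"
      define n where "n = x + (r - x) mod int p"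
      have r0: "0 \<le> r" "r < int p" using r R by auto
      have "n mod int p = (x + (r - x)) mod int p" unfolding n_def by (simp add: mod_simps)
      also have "\<dots> = r" using r0 by simp
      finally have nm: "n mod int p = r" .
      have "0 \<le> (r - x) mod int p" "(r - x) mod int p < int p" using p by auto
      then have "n \<in> {x..x + int p - 1}" unfolding n_def by auto
      then show "r \<in> (\<lambda>n. n mod int p) ` ?S" using nm r by (auto intro!: image_eqI[of _ _ n])
    qed
  qed
  show ?thesis using card_image[OF inj] img by simp
qed

lemma mod_cases_add:
  fixes r d p :: int
  assumes "0 \<le> r" "r < p" "0 \<le> d" "d < p"
  shows "(r + d) mod p = r + d \<or> (r + d) mod p = r + d - p"
proof (cases "r + d < p")
  case True then show ?thesis using assms by simp
next
  case False
  have "(r + d) mod p = ((r + d - p) + p) mod p" by simp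
  also have "\<dots> = (r + d - p) mod p" by (rule mod_add_self2)
  also have "\<dots> = r + d - p" using False assms by (intro mod_pos_pos_trivial) auto
  finally show ?thesis by simp
qed

lemma indep_periodic:
  fixes p :: nat and R :: "int set"
  assumes p: "int k + 1 < int p" and R: "R \<subseteq> {0..<int p}"
    and H: "\<And>r s d. r \<in> R \<Longrightarrow> s \<in> R \<Longrightarrow> d = 1 \<or> d = int k \<or> d = int k + 1 \<Longrightarrow> s = r + d \<or> s = r + d - int p \<Longrightarrow> False"
  shows "dist_indep {1,k,k+1} {n. n mod int p \<in> R}"
proof -
  have core: False if b: "b mod int p \<in> R" and a: "(b + d) mod int p \<in> R" and d: "d = 1 \<or> d = int k \<or> d = int k + 1" for b d
  proof -
    define r where "r = b mod int p"
    have r0: "0 \<le> r" "r < int p" unfolding r_def using p by auto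
    have "(b + d) mod int p = (r + d) mod int p" unfolding r_def by (simp add: mod_simps)
    moreover have "(r + d) mod int p = r + d \<or> (r + d) mod int p = r + d - int p"
      by (rule mod_cases_add) (use r0 d p in auto)
    ultimately show False using H[of r "(b + d) mod int p" d] b a d unfolding r_def[symmetric] by auto
  qed
  show ?thesis unfolding dist_indep_def
  proof (intro ballI notI)
    fix i j assume i: "i \<in> {n. n mod int p \<in> R}" and j: "j \<in> {n. n mod int p \<in> R}"
      and ij: "nat \<bar>i - j\<bar> \<in> {1, k, k+1}"
    have dd: "\<bar>i - j\<bar> = 1 \<or> \<bar>i - j\<bar> = int k \<or> \<bar>i - j\<bar> = int k + 1" using ij by auto
    show False
    proof (cases "j \<le> i")
      case True
      then have "i = j + \<bar>i - j\<bar>" by simp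
      then show False using core[of j "\<bar>i - j\<bar>"] i j dd by auto
    next
      case False
      then have "j = i + \<bar>i - j\<bar>" by simp
      then show False using core[of i "\<bar>i - j\<bar>"] i j dd by auto
    qed
  qed
qed



lemma R0_arith: "0 \<le> (i::int) \<Longrightarrow> i < M \<Longrightarrow> 0 \<le> j \<Longrightarrow> j < M \<Longrightarrow> r = 3*i \<or> r = 3*M + 2 + 3*i \<Longrightarrow> s = 3*j \<or> s = 3*M + 2 + 3*j
  \<Longrightarrow> d = 1 \<or> d = 3*M \<or> d = 3*M + 1 \<Longrightarrow> s = r + d \<or> s = r + d - (6*M+1) \<Longrightarrow> False"
  by (elim disjE; hypsubst; presburger)

lemma R2_arith: "0 \<le> (i::int) \<Longrightarrow> i \<le> M \<Longrightarrow> 0 \<le> j \<Longrightarrow> j \<le> M \<Longrightarrow> r = 3*i \<Longrightarrow> s = 3*j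
  \<Longrightarrow> d = 1 \<or> d = 3*M+2 \<or> d = 3*M + 3 \<Longrightarrow> s = r + d \<or> s = r + d - (3*M+4) \<Longrightarrow> False"
  by (elim disjE; hypsubst; presburger)

lemma R1_arith: "r = 3*(i::int) \<Longrightarrow> s = 3*j
  \<Longrightarrow> d = 1 \<or> d = 3*M+1 \<or> d = 3*M + 2 \<Longrightarrow> s = r + d \<or> s = r + d - (9*M+3) \<Longrightarrow> False"
  by (elim disjE; hypsubst; presburger)

lemma R0_props:
  fixes k m :: nat
  defines "R0 \<equiv> (\<lambda>i. 3*i) ` {0..<int m} \<union> (\<lambda>i. int k + 2 + 3*i) ` {0..<int m}"
  assumes k: "k = 3*m" and m1: "m \<ge> 1"
  shows "R0 \<subseteq> {0..<int (2*k+1)}" "card R0 = 2*m"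
    "dist_indep {1,k,k+1} {n. n mod int (2*k+1) \<in> R0}"
proof -
  show "R0 \<subseteq> {0..<int (2*k+1)}" unfolding R0_def using k by auto
  have d: "(\<lambda>i. 3*i) ` {0..<int m} \<inter> (\<lambda>i. int k + 2 + 3*i) ` {0..<int m} = {}"
    using k by auto
  have "card R0 = card ((\<lambda>i. 3*i) ` {0..<int m}) + card ((\<lambda>i. int k + 2 + 3*i) ` {0..<int m})"
    unfolding R0_def by (rule card_Un_disjoint) (use d in auto)
  also have "\<dots> = m + m" by (simp add: card_image inj_on_def)
  finally show "card R0 = 2*m" by simp
  show "dist_indep {1,k,k+1} {n. n mod int (2*k+1) \<in> R0}"
  proof (rule indep_periodic)
    show "int k + 1 < int (2*k+1)" using k m1 by simp
    show "R0 \<subseteq> {0..<int (2*k+1)}" unfolding R0_def using k by auto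
  next
    fix r s d assume r: "r \<in> R0" and s: "s \<in> R0" and dd: "d = 1 \<or> d = int k \<or> d = int k + 1"
      and e: "s = r + d \<or> s = r + d - int (2*k+1)"
    obtain i where i: "0 \<le> i" "i < int m" "r = 3*i \<or> r = int k + 2 + 3*i" using r unfolding R0_def by auto
    obtain j where j: "0 \<le> j" "j < int m" "s = 3*j \<or> s = int k + 2 + 3*j" using s unfolding R0_def by auto
    have kk: "int k = 3 * int m" using k by simp
    show False using R0_arith[of i "int m" j r s d] i j dd e kk by (simp add: algebra_simps)
  qed
qed

lemma R2_props:
  fixes k m :: nat
  defines "R2 \<equiv> (\<lambda>i. 3*i) ` {0..int m}"
  assumes k: "k = 3*m+2"
  shows "R2 \<subseteq> {0..<int (k+2)}" "card R2 = m+1"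
    "dist_indep {1,k,k+1} {n. n mod int (k+2) \<in> R2}"
proof -
  show "R2 \<subseteq> {0..<int (k+2)}" unfolding R2_def using k by auto
  have "card R2 = card {0..int m}" unfolding R2_def by (simp add: card_image inj_on_def)
  then show "card R2 = m+1" by simp
  show "dist_indep {1,k,k+1} {n. n mod int (k+2) \<in> R2}"
  proof (rule indep_periodic)
    show "int k + 1 < int (k+2)" by simp
    show "R2 \<subseteq> {0..<int (k+2)}" unfolding R2_def using k by auto
  next
    fix r s d assume r: "r \<in> R2" and s: "s \<in> R2" and dd: "d = 1 \<or> d = int k \<or> d = int k + 1"
      and e: "s = r + d \<or> s = r + d - int (k+2)"
    obtain i where i: "0 \<le> i" "i \<le> int m" "r = 3*i" using r unfolding R2_def by auto
    obtain j where j: "0 \<le> j" "j \<le> int m" "s = 3*j" using s unfolding R2_def by auto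
    have kk: "int k = 3 * int m + 2" using k by simp
    show False using R2_arith[of i "int m" j r s d] i j dd e kk by (simp add: algebra_simps)
  qed
qed

lemma R1_props:
  fixes k m :: nat
  defines "R1 \<equiv> (\<lambda>i. 3*i) ` {0..<int k}"
  assumes k: "k = 3*m+1"
  shows "R1 \<subseteq> {0..<int (3*k)}" "card R1 = k"
    "dist_indep {1,k,k+1} {n. n mod int (3*k) \<in> R1}"
proof -
  show "R1 \<subseteq> {0..<int (3*k)}" unfolding R1_def by auto
  have "card R1 = card {0..<int k}" unfolding R1_def by (simp add: card_image inj_on_def)
  then show "card R1 = k" by simp
  show "dist_indep {1,k,k+1} {n. n mod int (3*k) \<in> R1}"
  proof (rule indep_periodic)
    show "int k + 1 < int (3*k)" using k by simp
    show "R1 \<subseteq> {0..<int (3*k)}" unfolding R1_def by auto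
  next
    fix r s d assume r: "r \<in> R1" and s: "s \<in> R1" and dd: "d = 1 \<or> d = int k \<or> d = int k + 1"
      and e: "s = r + d \<or> s = r + d - int (3*k)"
    obtain i where i: "r = 3*i" using r unfolding R1_def by auto
    obtain j where j: "s = 3*j" using s unfolding R1_def by auto
    have kk: "int k = 3 * int m + 1" using k by simp
    show False using R1_arith[of r i s j d "int m"] i j dd e kk by (simp add: algebra_simps)
  qed
qed

lemma ratio_eq:
  assumes up: "\<And>A. dist_indep S A \<Longrightarrow> upper_density A \<le> v"
    and lo1: "dist_indep S B" and lo2: "upper_density B \<ge> v"
  shows "indep_ratio S = v"
  unfolding indep_ratio_def
proof (rule antisym)
  show "(SUP A\<in>{A. dist_indep S A}. upper_density A) \<le> v" by (rule SUP_least) (use up in auto)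
  show "v \<le> (SUP A\<in>{A. dist_indep S A}. upper_density A)" by (rule SUP_upper2[of B]) (use lo1 lo2 in auto)
qed

lemma case0:
  assumes k: "k = 3*m" "m \<ge> 1"
  shows "indep_ratio {1,k,k+1} = ereal (real (2*m) / real (2*k+1))"
proof (rule ratio_eq)
  fix A assume ind: "dist_indep {1,k,k+1} A"
  have s: "(\<Sum>t\<le>2*k. (1::nat)) = 2*k+1" by simp
  have "upper_density A \<le> ereal (real (2*m) / real (\<Sum>t\<le>2*k. (1::nat)))"
  proof (rule upper_gen)
    show "0 < (\<Sum>t\<le>2*k. (1::nat))" by simp
    fix x
    have e: "{..2*k} = {..<2*k+1}" by auto
    show "(\<Sum>t\<le>2*k. 1 * of_bool (x + int t \<in> A)) \<le> 2*m"
      unfolding e using local0[OF ind k, of x] by simp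
  qed
  then show "upper_density A \<le> ereal (real (2*m) / real (2*k+1))" unfolding s .
next
  define R0 where "R0 = (\<lambda>i. 3*i) ` {0..<int m} \<union> (\<lambda>i. int k + 2 + 3*i) ` {0..<int m}"
  note P = R0_props[OF k, folded R0_def]
  show "dist_indep {1,k,k+1} {n. n mod int (2*k+1) \<in> R0}" by (rule P(3))
  show "ereal (real (2*m) / real (2*k+1)) \<le> upper_density {n. n mod int (2*k+1) \<in> R0}"
    by (rule lower_gen) (use periodic_card[OF _ P(1)] P(2) in auto)
qed

lemma case2:
  assumes k: "k = 3*m+2"
  shows "indep_ratio {1,k,k+1} = ereal (real (2*m+2) / real (2*k+4))"
proof (rule ratio_eq)
  fix A assume ind: "dist_indep {1,k,k+1} A"
  define w :: "nat \<Rightarrow> nat" where "w t = 1 + of_bool (t = k+1)" for t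
  have s: "(\<Sum>t\<le>2*k+2. w t) = 2*k+4"
  proof -
    have "(\<Sum>t\<le>2*k+2. w t) = (\<Sum>t\<le>2*k+2. (1::nat)) + (\<Sum>t\<le>2*k+2. of_bool (t = k+1))"
      unfolding w_def by (rule sum.distrib)
    also have "(\<Sum>t\<le>2*k+2. (of_bool (t = k+1)::nat)) = 1"
    proof -
      have "(\<Sum>t\<le>2*k+2. (of_bool (t = k+1)::nat)) = (\<Sum>t\<le>2*k+2. if t = k+1 then 1 else 0)"
        by (rule sum.cong) auto
      also have "\<dots> = 1" by (subst sum.delta) auto
      finally show ?thesis .
    qed
    finally show ?thesis by simp
  qed
  have "upper_density A \<le> ereal (real (2*m+2) / real (\<Sum>t\<le>2*k+2. w t))"
  proof (rule upper_gen)
    show "0 < (\<Sum>t\<le>2*k+2. w t)" using s by simp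
    fix x
    have e: "{..2*k+2} = {..<2*k+3}" by auto
    have "(\<Sum>t\<le>2*k+2. w t * of_bool (x + int t \<in> A)) = (\<Sum>t<2*k+3. (of_bool (x + int t \<in> A)::nat)) + (\<Sum>t<2*k+3. of_bool (t = k+1) * of_bool (x + int t \<in> A))"
      unfolding e w_def by (simp add: sum.distrib algebra_simps)
    also have "(\<Sum>t<2*k+3. (of_bool (t = k+1)::nat) * of_bool (x + int t \<in> A)) = of_bool (x + int k + 1 \<in> A)"
    proof -
      have "(\<Sum>t<2*k+3. (of_bool (t = k+1)::nat) * of_bool (x + int t \<in> A)) = (\<Sum>t<2*k+3. if t = k+1 then of_bool (x + int t \<in> A) else 0)"
        by (rule sum.cong) auto
      also have "\<dots> = of_bool (x + int (k+1) \<in> A)" by (subst sum.delta) auto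
      finally show ?thesis by (simp only: of_nat_add of_nat_1 add.assoc)
    qed
    finally show "(\<Sum>t\<le>2*k+2. w t * of_bool (x + int t \<in> A)) \<le> 2*m+2"
      using local2[OF ind k, of x] by simp
  qed
  then show "upper_density A \<le> ereal (real (2*m+2) / real (2*k+4))" unfolding s .
next
  define R2 where "R2 = (\<lambda>i. 3*i) ` {0..int m}"
  note P = R2_props[OF k, folded R2_def]
  show "dist_indep {1,k,k+1} {n. n mod int (k+2) \<in> R2}" by (rule P(3))
  have eq: "real (2*m+2) / real (2*k+4) = real (m+1) / real (k+2)"
    by (simp add: field_simps)
  show "ereal (real (2*m+2) / real (2*k+4)) \<le> upper_density {n. n mod int (k+2) \<in> R2}"
    unfolding eq by (rule lower_gen) (use periodic_card[OF _ P(1)] P(2) in auto)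
qed

lemma case1:
  assumes k: "k = 3*m+1" "k \<ge> 2"
  shows "indep_ratio {1,k,k+1} = ereal (real 1 / real 3)"
proof (rule ratio_eq)
  fix A assume ind: "dist_indep {1,k,k+1} A"
  define w :: "nat \<Rightarrow> nat" where "w t = of_bool (t \<in> {0,1,k+1})" for t
  have gen: "(\<Sum>t\<le>k+1. w t * f t) = f 0 + f 1 + f (k+1)" for f :: "nat \<Rightarrow> nat"
  proof -
    have "(\<Sum>t\<le>k+1. w t * f t) = (\<Sum>t\<le>k+1. if t \<in> {0,1,k+1} then f t else 0)"
      unfolding w_def by (rule sum.cong) auto
    also have "\<dots> = (\<Sum>t\<in>{..k+1} \<inter> {0,1,k+1}. f t)"
      by (rule sum.inter_restrict[symmetric]) simp
    also have "{..k+1} \<inter> {0,1,k+1} = {0,1,k+1}" by auto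
    also have "(\<Sum>t\<in>{0,1,k+1}. f t) = f 0 + f 1 + f (k+1)" using k by simp
    finally show ?thesis .
  qed
  have s: "(\<Sum>t\<le>k+1. w t) = 3" using gen[of "\<lambda>_. 1"] by simp
  have "upper_density A \<le> ereal (real 1 / real (\<Sum>t\<le>k+1. w t))"
  proof (rule upper_gen)
    show "0 < (\<Sum>t\<le>k+1. w t)" using s by simp
    fix x
    have "(\<Sum>t\<le>k+1. w t * of_bool (x + int t \<in> A)) = of_bool (x \<in> A) + of_bool (x + 1 \<in> A) + of_bool (x + (int k + 1) \<in> A)"
      by (subst gen) (simp add: algebra_simps)
    also have "\<dots> \<le> 1"
      using c1[OF ind, of x] ck1[OF ind, of x] ck[OF ind, of "x+1"] by (auto simp: algebra_simps)
    finally show "(\<Sum>t\<le>k+1. w t * of_bool (x + int t \<in> A)) \<le> 1" .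
  qed
  then show "upper_density A \<le> ereal (real 1 / real 3)" unfolding s .
next
  define R1 where "R1 = (\<lambda>i. 3*i) ` {0..<int k}"
  note P = R1_props[OF k(1), folded R1_def]
  show "dist_indep {1,k,k+1} {n. n mod int (3*k) \<in> R1}" by (rule P(3))
  have eq: "real 1 / real 3 = real k / real (3*k)" using k by simp
  show "ereal (real 1 / real 3) \<le> upper_density {n. n mod int (3*k) \<in> R1}"
    unfolding eq by (rule lower_gen) (use periodic_card[OF _ P(1)] P(2) k in auto)
qed

theorem theorem35:
  fixes k :: nat
  assumes "k \<ge> 2"
  shows "indep_ratio {1, k, k+1} =
    (if k mod 3 = 0 then ereal (2*real k / (6*real k + 3))
     else if k mod 3 = 1 then ereal (1/3)
     else ereal ((real k + 1) / (3*real k + 6)))"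
proof -
  define m where "m = k div 3"
  consider "k mod 3 = 0" | "k mod 3 = 1" | "k mod 3 = 2" by linarith
  then show ?thesis
  proof cases
    case 1
    then have k: "k = 3*m" "m \<ge> 1" using assms unfolding m_def by presburger+
    have "real (2*m) / real (2*k+1) = 2*real k / (6*real k + 3)"
      using k by (simp add: field_simps)
    then show ?thesis using case0[OF k] 1 by simp
  next
    case 2
    then have k: "k = 3*m+1" using assms unfolding m_def by presburger
    show ?thesis using case1[OF k assms] 2 by simp
  next
    case 3
    then have k: "k = 3*m+2" using assms unfolding m_def by presburger
    have "real (2*m+2) / real (2*k+4) = (real k + 1) / (3*real k + 6)"
      using k by (simp add: field_simps)
    then show ?thesis using case2[OF k] 3 by simp
  qed
qed

end
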